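(* There exist trees $T$ with $n$ nodes (for arbitrarily large $n$) such that, when the edges of $T$ arrive in uniformly random order, the greedy algorithm outputs an orientation with maximum in-degree $\Omega(\log n/\log\log n)$ with high probability.
   Context: Online graph balancing: the edges of an undirected graph $G=(V,E)$ arrive one at a time (here in the order of a uniformly random permutation of $E$), and upon arrival each edge must be irrevocably oriented toward one of its two endpoints; the load of a vertex is its current in-degree, and the objective is the maximum in-degree. The greedy algorithm orients each arriving edge $(u,v)$ toward the endpoint with the smaller current load (in-degree among already-oriented edges), breaking ties uniformly at random. "With high probability" means with probability tending to $1$ as $n\to\infty$. *)

theory Defs
  imports "HOL-Probability.Probability" "HOL-Combinatorics.Multiset_Permutations"
begin

definition simple_graph :: "'a set \<Rightarrow> 'a set set \<Rightarrow> bool" where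
  "simple_graph V E \<longleftrightarrow> finite V \<and> (\<forall>e\<in>E. e \<subseteq> V \<and> card e = 2)"

definition adj :: "'a set set \<Rightarrow> 'a \<Rightarrow> 'a \<Rightarrow> bool" where
  "adj E u v \<longleftrightarrow> {u, v} \<in> E"

definition connected_graph :: "'a set \<Rightarrow> 'a set set \<Rightarrow> bool" where
  "connected_graph V E \<longleftrightarrow> V \<noteq> {} \<and> (\<forall>u\<in>V. \<forall>v\<in>V. (adj E)\<^sup>*\<^sup>* u v)"

definition is_cycle :: "'a set set \<Rightarrow> 'a list \<Rightarrow> bool" where
  "is_cycle E cs \<longleftrightarrow> length cs \<ge> 3 \<and> distinct cs \<and>
     (\<forall>i. Suc i < length cs \<longrightarrow> adj E (cs ! i) (cs ! Suc i)) \<and>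
     adj E (last cs) (hd cs)"

definition acyclic_graph :: "'a set set \<Rightarrow> bool" where
  "acyclic_graph E \<longleftrightarrow> \<not> (\<exists>cs. is_cycle E cs)"

definition is_tree :: "'a set \<Rightarrow> 'a set set \<Rightarrow> bool" where
  "is_tree V E \<longleftrightarrow> simple_graph V E \<and> connected_graph V E \<and> acyclic_graph E"

text \<open>One greedy step: the arriving edge e is oriented toward an endpoint of minimum
  current load (in-degree), ties broken uniformly at random; that endpoint's load grows.\<close>
definition greedy_step :: "'a set \<Rightarrow> ('a \<Rightarrow> nat) \<Rightarrow> ('a \<Rightarrow> nat) pmf" where
  "greedy_step e l = map_pmf (\<lambda>x. l(x := Suc (l x)))
      (pmf_of_set {x \<in> e. \<forall>y\<in>e. l x \<le> l y})"

fun greedy_run :: "'a set list \<Rightarrow> ('a \<Rightarrow> nat) \<Rightarrow> ('a \<Rightarrow> nat) pmf" where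
  "greedy_run [] l = return_pmf l"
| "greedy_run (e # es) l = bind_pmf (greedy_step e l) (greedy_run es)"

definition greedy_random_order :: "'a set set \<Rightarrow> ('a \<Rightarrow> nat) pmf" where
  "greedy_random_order E =
     bind_pmf (pmf_of_set (permutations_of_set E)) (\<lambda>es. greedy_run es (\<lambda>_. 0))"

definition max_load :: "'a set \<Rightarrow> ('a \<Rightarrow> nat) \<Rightarrow> nat" where
  "max_load V l = Max (l ` V)"

end

theory Submission
  imports Defs
begin


lemma prob_bind_pmf:
  "measure_pmf.prob (bind_pmf p f) A = measure_pmf.expectation p (\<lambda>x. measure_pmf.prob (f x) A)"
proof -
  have "ennreal (measure_pmf.prob (bind_pmf p f) A) = emeasure (measure_pmf (bind_pmf p f)) A"
    by (simp add: measure_pmf.emeasure_eq_measure)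
  also have "\<dots> = (\<integral>\<^sup>+x. emeasure (measure_pmf (f x)) A \<partial>measure_pmf p)" by simp
  also have "\<dots> = (\<integral>\<^sup>+x. ennreal (measure_pmf.prob (f x) A) \<partial>measure_pmf p)"
    by (simp add: measure_pmf.emeasure_eq_measure)
  also have "\<dots> = ennreal (measure_pmf.expectation p (\<lambda>x. measure_pmf.prob (f x) A))"
    by (rule nn_integral_eq_integral) (auto intro!: measure_pmf.integrable_const_bound[where B=1])
  finally show ?thesis by (simp add: integral_nonneg_AE)
qed

lemma prob_bind_le:
  assumes "\<And>x. x \<in> set_pmf p \<Longrightarrow> measure_pmf.prob (f x) A \<le> B"
  shows "measure_pmf.prob (bind_pmf p f) A \<le> B"
  unfolding prob_bind_pmf
  by (rule measure_pmf.integral_le_const)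
     (auto intro!: measure_pmf.integrable_const_bound[where B=1] AE_pmfI assms)

definition minset :: "'a set \<Rightarrow> ('a \<Rightarrow> nat) \<Rightarrow> 'a set" where
  "minset e l = {x \<in> e. \<forall>y\<in>e. l x \<le> l y}"

fun greedy_ch :: "'a set list \<Rightarrow> ('a \<Rightarrow> nat) \<Rightarrow> 'a list pmf" where
  "greedy_ch [] l = return_pmf []"
| "greedy_ch (e # es) l =
     bind_pmf (pmf_of_set (minset e l)) (\<lambda>x. map_pmf (Cons x) (greedy_ch es (l(x := Suc (l x)))))"

definition cnt :: "'a list \<Rightarrow> nat \<Rightarrow> 'a \<Rightarrow> nat" where
  "cnt xs i y = card {j. j < i \<and> j < length xs \<and> xs ! j = y}"

definition ld :: "('a \<Rightarrow> nat) \<Rightarrow> 'a list \<Rightarrow> nat \<Rightarrow> 'a \<Rightarrow> nat" where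
  "ld l xs i y = l y + cnt xs i y"

lemma cnt_0[simp]: "cnt xs 0 y = 0"
  by (simp add: cnt_def)

lemma cnt_Cons_Suc: "cnt (x # xs) (Suc i) y = (if x = y then 1 else 0) + cnt xs i y"
proof -
  have "{j. j < Suc i \<and> j < length (x # xs) \<and> (x # xs) ! j = y} =
        (if x = y then {0} else {}) \<union> Suc ` {j. j < i \<and> j < length xs \<and> xs ! j = y}"
    apply (rule set_eqI)
    subgoal for j by (cases j) (auto simp: image_iff)
    done
  moreover have "card ((if x = y then {0} else {}) \<union> Suc ` {j. j < i \<and> j < length xs \<and> xs ! j = y})
      = (if x = y then 1 else 0) + card {j. j < i \<and> j < length xs \<and> xs ! j = y}"
    by (auto simp: card_image)
  ultimately show ?thesis by (simp add: cnt_def)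
qed

lemma ld_Cons_Suc: "ld l (x # xs) (Suc i) = ld (l(x := Suc (l x))) xs i"
  by (auto simp: ld_def cnt_Cons_Suc fun_eq_iff)

lemma ld_0[simp]: "ld l xs 0 = l"
  by (auto simp: ld_def fun_eq_iff)

lemma cnt_mono: "i \<le> i' \<Longrightarrow> cnt xs i y \<le> cnt xs i' y"
  unfolding cnt_def by (rule card_mono) auto

lemma greedy_run_ch:
  "greedy_run es l = map_pmf (\<lambda>xs. ld l xs (length xs)) (greedy_ch es l)"
proof (induction es arbitrary: l)
  case Nil
  then show ?case by simp
next
  case (Cons e es)
  have "greedy_run (e # es) l = bind_pmf (pmf_of_set (minset e l)) (\<lambda>x. greedy_run es (l(x := Suc (l x))))"
    by (simp add: greedy_step_def bind_map_pmf minset_def)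
  also have "\<dots> = bind_pmf (pmf_of_set (minset e l))
      (\<lambda>x. map_pmf (\<lambda>xs. ld (l(x := Suc (l x))) xs (length xs)) (greedy_ch es (l(x := Suc (l x)))))"
    using Cons.IH by presburger
  also have "\<dots> = map_pmf (\<lambda>xs. ld l xs (length xs)) (greedy_ch (e # es) l)"
    by (simp add: map_bind_pmf pmf.map_comp o_def ld_Cons_Suc)
  finally show ?case .
qed

lemma greedy_ch_support:
  assumes "xs \<in> set_pmf (greedy_ch es l)" "\<forall>e\<in>set es. finite e \<and> e \<noteq> {}"
  shows "length xs = length es \<and> (\<forall>i<length es. xs ! i \<in> minset (es ! i) (ld l xs i))"
  using assms
proof (induction es arbitrary: l xs)
  case Nil
  then show ?case by simp
next
  case (Cons e es)
  have fe: "finite e" "e \<noteq> {}" using Cons.prems by auto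
  have ne: "minset e l \<noteq> {}"
  proof -
    obtain x where "x \<in> e" "\<forall>y\<in>e. l x \<le> l y"
      using ex_min_if_finite[of "l ` e"] fe
      by (metis (mono_tags, lifting) arg_min_if_finite(1,2) not_le)
    then show ?thesis unfolding minset_def by blast
  qed
  have fm: "finite (minset e l)" using fe unfolding minset_def by auto
  from Cons.prems(1) ne fm obtain x ys where xs: "xs = x # ys" and x: "x \<in> minset e l"
    and ys: "ys \<in> set_pmf (greedy_ch es (l(x := Suc (l x))))"
    by auto
  have "\<forall>e\<in>set es. finite e \<and> e \<noteq> {}" using Cons.prems(2) by simp
  from Cons.IH[OF ys this] have IH:
    "length ys = length es \<and> (\<forall>i<length es. ys ! i \<in> minset (es ! i) (ld (l(x := Suc (l x))) ys i))"
    .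
  show ?case
  proof (intro conjI allI impI)
    show "length xs = length (e # es)" using IH xs by simp
    fix i assume i: "i < length (e # es)"
    show "xs ! i \<in> minset ((e # es) ! i) (ld l xs i)"
    proof (cases i)
      case 0 then show ?thesis using x xs by simp
    next
      case (Suc i')
      then have "i' < length es" using i by simp
      then have "ys ! i' \<in> minset (es ! i') (ld (l(x := Suc (l x))) ys i')" using IH by blast
      then show ?thesis using xs Suc by (simp only: ld_Cons_Suc nth_Cons_Suc)
    qed
  qed
qed


definition tie :: "('a \<Rightarrow> nat) \<Rightarrow> 'a set list \<Rightarrow> 'a list \<Rightarrow> 'a \<Rightarrow> nat \<Rightarrow> bool" where
  "tie l es xs v i \<longleftrightarrow> v \<in> minset (es ! i) (ld l xs i) \<and> card (minset (es ! i) (ld l xs i)) = 2"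

definition TLev :: "('a \<Rightarrow> nat) \<Rightarrow> 'a set list \<Rightarrow> 'a \<Rightarrow> nat set \<Rightarrow> nat \<Rightarrow> 'a list set" where
  "TLev l es v S r = {xs. (\<forall>i\<in>S. tie l es xs v i \<longrightarrow> xs ! i \<noteq> v) \<and> r \<le> card {i\<in>S. tie l es xs v i}}"

lemma tie_Cons_0: "tie l (e # es) (x # ys) v 0 \<longleftrightarrow> v \<in> minset e l \<and> card (minset e l) = 2"
  by (simp add: tie_def)

lemma tie_Cons_Suc: "tie l (e # es) (x # ys) v (Suc i) \<longleftrightarrow> tie (l(x := Suc (l x))) es ys v i"
  by (simp add: tie_def ld_Cons_Suc)

lemma ball_nat_split: "(\<forall>i\<in>S. P i) \<longleftrightarrow> (0 \<in> S \<longrightarrow> P 0) \<and> (\<forall>i. Suc i \<in> S \<longrightarrow> P (Suc i))"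
  by (metis not0_implies_Suc)

lemma prob_le_1: "measure_pmf.prob p A \<le> 1"
  by simp

lemma coin_lemma:
  assumes "S \<subseteq> {..<length es}"
  shows "measure_pmf.prob (greedy_ch es l) (TLev l es v S r) \<le> (1/2) ^ r"
  using assms
proof (induction es arbitrary: l S r)
  case Nil
  then have "S = {}" by auto
  then show ?case
    by (cases r) (auto simp: TLev_def)
next
  case (Cons e es)
  show ?case
  proof (cases r)
    case 0 then show ?thesis by simp
  next
    case (Suc r')
    define M where "M = minset e l"
    define S' where "S' = {i. Suc i \<in> S}"
    have S': "S' \<subseteq> {..<length es}" using Cons.prems by (auto simp: S'_def)
    define t0 where "t0 = (v \<in> M \<and> card M = 2)"
    have cardeq: "{i\<in>S. tie l (e # es) (x # ys) v i} =
        (if 0 \<in> S \<and> t0 then {0} else {}) \<union> Suc ` {i\<in>S'. tie (l(x := Suc (l x))) es ys v i}"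
      for x ys
      apply (rule set_eqI)
      subgoal for j by (cases j) (auto simp: S'_def t0_def M_def tie_Cons_0 tie_Cons_Suc image_iff)
      done
    have cardeq2: "card {i\<in>S. tie l (e # es) (x # ys) v i} =
        (if 0 \<in> S \<and> t0 then 1 else 0) + card {i\<in>S'. tie (l(x := Suc (l x))) es ys v i}" for x ys
    proof -
      have "finite S'" using S' finite_subset by blast
      then show ?thesis unfolding cardeq by (auto simp: card_image card_insert_if)
    qed
    have pre: "(Cons x -` TLev l (e # es) v S r) =
       {ys. (0 \<in> S \<and> t0 \<longrightarrow> x \<noteq> v) \<and> (\<forall>i\<in>S'. tie (l(x := Suc (l x))) es ys v i \<longrightarrow> ys ! i \<noteq> v)
          \<and> r \<le> (if 0 \<in> S \<and> t0 then 1 else 0) + card {i\<in>S'. tie (l(x := Suc (l x))) es ys v i}}" for x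
    proof -
      have "(\<forall>i\<in>S. tie l (e # es) (x # ys) v i \<longrightarrow> (x # ys) ! i \<noteq> v) \<longleftrightarrow>
            (0 \<in> S \<and> t0 \<longrightarrow> x \<noteq> v) \<and> (\<forall>i\<in>S'. tie (l(x := Suc (l x))) es ys v i \<longrightarrow> ys ! i \<noteq> v)" for ys
        by (subst ball_nat_split) (simp add: S'_def t0_def M_def tie_Cons_0 tie_Cons_Suc, blast)
      then show ?thesis by (auto simp: TLev_def cardeq2)
    qed
    have step: "measure_pmf.prob (greedy_ch (e # es) l) (TLev l (e # es) v S r) =
       measure_pmf.expectation (pmf_of_set M)
         (\<lambda>x. measure_pmf.prob (greedy_ch es (l(x := Suc (l x)))) (Cons x -` TLev l (e # es) v S r))"
      by (simp add: prob_bind_pmf M_def measure_map_pmf)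
    show ?thesis
    proof (cases "0 \<in> S \<and> t0")
      case True
      have fM: "finite M" "M \<noteq> {}" "card M = 2" "v \<in> M" using True t0_def card.infinite by fastforce+
      have le: "measure_pmf.prob (greedy_ch es (l(x := Suc (l x)))) (Cons x -` TLev l (e # es) v S r)
          \<le> (if x = v then 0 else (1/2) ^ r')" for x
      proof (cases "x = v")
        case True
        then have "Cons x -` TLev l (e # es) v S r = {}" using pre \<open>0 \<in> S \<and> t0\<close> by auto
        then show ?thesis by simp
      next
        case False
        have "Cons x -` TLev l (e # es) v S r \<subseteq> TLev (l(x := Suc (l x))) es v S' r'"
          using pre[of x] True Suc by (auto simp: TLev_def)
        then have "measure_pmf.prob (greedy_ch es (l(x := Suc (l x)))) (Cons x -` TLev l (e # es) v S r)
          \<le> measure_pmf.prob (greedy_ch es (l(x := Suc (l x)))) (TLev (l(x := Suc (l x))) es v S' r')"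
          by (rule measure_pmf.finite_measure_mono) simp
        also have "\<dots> \<le> (1/2) ^ r'" by (rule Cons.IH[OF S'])
        finally show ?thesis using False by simp
      qed
      have "measure_pmf.expectation (pmf_of_set M)
         (\<lambda>x. measure_pmf.prob (greedy_ch es (l(x := Suc (l x)))) (Cons x -` TLev l (e # es) v S r))
         \<le> measure_pmf.expectation (pmf_of_set M) (\<lambda>x. if x = v then 0 else (1/2) ^ r')"
        using fM le by (simp add: integral_pmf_of_set sum_mono divide_right_mono)
      also have "\<dots> = (\<Sum>x\<in>M. if x = v then 0 else (1/2::real) ^ r') / 2"
        using fM by (simp add: integral_pmf_of_set)
      also have "(\<Sum>x\<in>M. if x = v then 0 else (1/2::real) ^ r') = (\<Sum>x\<in>M - {v}. (1/2::real) ^ r')"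
        using fM by (simp add: sum.If_cases Diff_eq Int_commute)
      also have "\<dots> = (1/2) ^ r'" using fM by simp
      finally have A: "measure_pmf.expectation (pmf_of_set M)
         (\<lambda>x. measure_pmf.prob (greedy_ch es (l(x := Suc (l x)))) (Cons x -` TLev l (e # es) v S r))
         \<le> (1/2) ^ r' / 2" .
      have "(1/2::real) ^ r' / 2 = (1/2) ^ r" using Suc by simp
      then show ?thesis using step A by linarith
    next
      case False
      have "measure_pmf.prob (greedy_ch (e # es) l) (TLev l (e # es) v S r) \<le> (1/2) ^ r"
        unfolding step
      proof (rule measure_pmf.integral_le_const)
        show "integrable (measure_pmf (pmf_of_set M))
          (\<lambda>x. measure_pmf.prob (greedy_ch es (l(x := Suc (l x)))) (Cons x -` TLev l (e # es) v S r))"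
          by (auto intro!: measure_pmf.integrable_const_bound[where B=1])
        have "measure_pmf.prob (greedy_ch es (l(x := Suc (l x)))) (Cons x -` TLev l (e # es) v S r) \<le> (1/2)^r" for x
        proof -
          have "Cons x -` TLev l (e # es) v S r \<subseteq> TLev (l(x := Suc (l x))) es v S' r"
            using pre[of x] False by (auto simp: TLev_def)
          then have "measure_pmf.prob (greedy_ch es (l(x := Suc (l x)))) (Cons x -` TLev l (e # es) v S r)
            \<le> measure_pmf.prob (greedy_ch es (l(x := Suc (l x)))) (TLev (l(x := Suc (l x))) es v S' r)"
            by (rule measure_pmf.finite_measure_mono) simp
          also have "\<dots> \<le> (1/2) ^ r" by (rule Cons.IH[OF S'])
          finally show ?thesis .
        qed
        then show "AE x in measure_pmf (pmf_of_set M).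
          measure_pmf.prob (greedy_ch es (l(x := Suc (l x)))) (Cons x -` TLev l (e # es) v S r) \<le> (1/2)^r"
          by simp
      qed
      then show ?thesis .
    qed
  qed
qed


lemma cnt_Suc: "i < length xs \<Longrightarrow> cnt xs (Suc i) y = cnt xs i y + (if xs ! i = y then 1 else 0)"
proof -
  assume i: "i < length xs"
  have "{j. j < Suc i \<and> j < length xs \<and> xs ! j = y} =
        {j. j < i \<and> j < length xs \<and> xs ! j = y} \<union> (if xs ! i = y then {i} else {})"
    using i less_Suc_eq by auto
  then show ?thesis by (auto simp: cnt_def)
qed

lemma minset_pair:
  assumes "c \<noteq> v"
  shows "minset {v, c} l = (if l v < l c then {v} else if l c < l v then {c} else {v, c})"
  using assms by (auto simp: minset_def)

lemma det_core:
  fixes es :: "'a set list" and xs :: "'a list" and tp :: "'a \<Rightarrow> nat"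
    and CE :: "'a \<Rightarrow> 'a set set" and th :: "nat \<Rightarrow> nat"
  defines "P \<equiv> \<lambda>v. {i. th (tp v - 1) \<le> i \<and> i < th (tp v) \<and> es ! i \<in> CE v}"
  assumes len: "length xs = length es"
    and valid: "\<forall>i<length es. xs ! i \<in> minset (es ! i) (ld (\<lambda>_. 0) xs i)"
    and CE: "\<And>v e. 1 \<le> tp v \<Longrightarrow> tp v \<le> L \<Longrightarrow> e \<in> CE v \<Longrightarrow> \<exists>c. e = {v, c} \<and> c \<noteq> v \<and> tp c = tp v - 1"
    and mono: "mono th" and thL: "th L \<le> length es"
    and G1: "\<And>v. 1 \<le> tp v \<Longrightarrow> tp v \<le> L \<Longrightarrow> (tp v - 1) + r \<le> card (P v)"
    and G2: "\<And>v. 1 \<le> tp v \<Longrightarrow> tp v \<le> L \<Longrightarrow> xs \<notin> TLev (\<lambda>_. 0) es v (P v) r"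
  shows "tp v \<le> L \<Longrightarrow> tp v \<le> cnt xs (th (tp v)) v"
proof -
  have ld0: "ld (\<lambda>_. 0) xs i = cnt xs i" for i by (auto simp: ld_def fun_eq_iff)
  have main: "\<forall>v. tp v = k \<longrightarrow> k \<le> L \<longrightarrow> k \<le> cnt xs (th k) v" for k
  proof (induction k)
    case 0 then show ?case by simp
  next
    case (Suc k')
    show ?case
    proof (intro allI impI)
      fix v assume tv: "tp v = Suc k'" and kL: "Suc k' \<le> L"
      show "Suc k' \<le> cnt xs (th (Suc k')) v"
      proof (rule ccontr)
        assume "\<not> Suc k' \<le> cnt xs (th (Suc k')) v"
        then have low: "cnt xs (th (Suc k')) v \<le> k'" by simp
        have thle: "th (Suc k') \<le> length es" using mono kL thL by (meson monoD order_trans)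
        have Psub: "P v \<subseteq> {..<th (Suc k')}" by (auto simp: P_def tv)
        have finP: "finite (P v)" using Psub finite_subset by blast
        have info: "\<exists>c. es ! i = {v, c} \<and> c \<noteq> v \<and> cnt xs i v \<le> cnt xs i c \<and> k' \<le> cnt xs i c
                \<and> Suc i \<le> th (Suc k') \<and> i < length es" if iP: "i \<in> P v" for i
        proof -
          from iP have i1: "th k' \<le> i" "i < th (Suc k')" "es ! i \<in> CE v" by (auto simp: P_def tv)
          obtain c where c: "es ! i = {v, c}" "c \<noteq> v" "tp c = k'"
            using CE[of v "es ! i"] tv kL i1 by auto
          have "k' \<le> cnt xs (th k') c" using Suc.IH c(3) kL by simp
          also have "\<dots> \<le> cnt xs i c" using i1(1) by (rule cnt_mono)
          finally have kc: "k' \<le> cnt xs i c" .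
          have "cnt xs i v \<le> cnt xs (th (Suc k')) v" using i1 by (intro cnt_mono) simp
          then have "cnt xs i v \<le> cnt xs i c" using low kc by simp
          then show ?thesis using c kc i1 thle by auto
        qed
        define T where "T = {i \<in> P v. tie (\<lambda>_. 0) es xs v i}"
        have lost: "\<forall>i\<in>P v. tie (\<lambda>_. 0) es xs v i \<longrightarrow> xs ! i \<noteq> v"
        proof (intro ballI impI notI)
          fix i assume iP: "i \<in> P v" and t: "tie (\<lambda>_. 0) es xs v i" and xv: "xs ! i = v"
          obtain c where c: "es ! i = {v, c}" "c \<noteq> v" "cnt xs i v \<le> cnt xs i c" "k' \<le> cnt xs i c"
              "Suc i \<le> th (Suc k')" "i < length es" using info[OF iP] by blast
          have "card (minset {v, c} (cnt xs i)) = 2" using t c(1) by (simp add: tie_def ld0)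
          then have "cnt xs i v = cnt xs i c" using c(2,3) by (auto simp: minset_pair split: if_splits)
          then have "Suc k' \<le> cnt xs (Suc i) v" using c(4,6) xv len by (simp add: cnt_Suc)
          also have "\<dots> \<le> cnt xs (th (Suc k')) v" using c(5) by (rule cnt_mono)
          finally show False using low by simp
        qed
        have won: "xs ! i = v" if iP: "i \<in> P v" and nt: "\<not> tie (\<lambda>_. 0) es xs v i" for i
        proof -
          obtain c where c: "es ! i = {v, c}" "c \<noteq> v" "cnt xs i v \<le> cnt xs i c"
              "i < length es" using info[OF iP] by blast
          have mem: "xs ! i \<in> minset {v, c} (cnt xs i)" using valid c(1,4) by (metis ld0)
          show ?thesis
          proof (cases "cnt xs i v < cnt xs i c")
            case True then show ?thesis using mem c(2) by (simp add: minset_pair)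
          next
            case False
            then have "minset {v, c} (cnt xs i) = {v, c}" using c(2,3) by (simp add: minset_pair)
            then have "tie (\<lambda>_. 0) es xs v i" using c(1,2) by (simp add: tie_def ld0)
            then show ?thesis using nt by simp
          qed
        qed
        have "\<not> r \<le> card T"
          using G2[of v] tv kL lost by (simp add: TLev_def T_def)
        then have cT: "card T < r" by simp
        have TP: "T \<subseteq> P v" by (auto simp: T_def)
        then have "card (P v - T) = card (P v) - card T"
          using finP finite_subset by (metis card_Diff_subset)
        moreover have "card T \<le> card (P v)" using TP finP card_mono by blast
        ultimately have "card (P v) \<le> card T + card (P v - T)" by simp
        moreover have "Suc k' - 1 + r \<le> card (P v)" using G1[of v] tv kL by simp
        ultimately have c1: "Suc k' \<le> card (P v - T)" using cT by simp
        have "P v - T \<subseteq> {j. j < th (Suc k') \<and> j < length xs \<and> xs ! j = v}"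
          using won Psub thle len by (auto simp: T_def)
        then have "card (P v - T) \<le> cnt xs (th (Suc k')) v"
          unfolding cnt_def by (intro card_mono) auto
        then show False using c1 low by simp
      qed
    qed
  qed
  assume "tp v \<le> L"
  then show "tp v \<le> cnt xs (th (tp v)) v" using main by simp
qed


lemma prefix_avoid:
  assumes "finite A" "T \<subseteq> A"
  shows "measure_pmf.prob (pmf_of_set (permutations_of_set A)) {es. set (take w es) \<inter> T = {}}
         \<le> (1 - real (card T) / real (card A)) ^ w"
  using assms
proof (induction w arbitrary: A)
  case 0 then show ?case by simp
next
  case (Suc w)
  show ?case
  proof (cases "A = {}")
    case True
    then have "T = {}" using Suc.prems by auto
    then show ?thesis by simp
  next
    case False
    define m where "m = card A"
    define t where "t = card T"
    have fT: "finite T" using Suc.prems finite_subset by blast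
    have m0: "m > 0" using False Suc.prems by (simp add: m_def card_gt_0_iff)
    have tm: "t \<le> m" using Suc.prems by (simp add: t_def m_def card_mono)
    define c where "c = (1 - real t / real (m - 1)) ^ w"
    have eq: "pmf_of_set (permutations_of_set A) =
        bind_pmf (pmf_of_set A) (\<lambda>x. map_pmf (Cons x) (pmf_of_set (permutations_of_set (A - {x}))))"
      using random_permutation_of_set[OF Suc.prems(1) False] by (simp add: map_pmf_def)
    have le: "measure_pmf.prob (pmf_of_set (permutations_of_set (A - {x})))
                (Cons x -` {es. set (take (Suc w) es) \<inter> T = {}})
          \<le> (if x \<in> T then 0 else c)" if xA: "x \<in> A" for x
    proof (cases "x \<in> T")
      case True
      then show ?thesis by simp
    next
      case False
      have pre: "Cons x -` {es. set (take (Suc w) es) \<inter> T = {}} = {es. set (take w es) \<inter> T = {}}"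
        using False by auto
      have "T \<subseteq> A - {x}" using Suc.prems False by auto
      moreover have "card (A - {x}) = m - 1" using xA Suc.prems by (simp add: m_def)
      ultimately show ?thesis using Suc.IH[of "A - {x}"] Suc.prems False pre
        by (simp add: c_def t_def)
    qed
    have "measure_pmf.prob (pmf_of_set (permutations_of_set A)) {es. set (take (Suc w) es) \<inter> T = {}}
        = measure_pmf.expectation (pmf_of_set A) (\<lambda>x. measure_pmf.prob (pmf_of_set (permutations_of_set (A - {x})))
                (Cons x -` {es. set (take (Suc w) es) \<inter> T = {}}))"
      unfolding eq prob_bind_pmf by (simp add: measure_map_pmf)
    also have "\<dots> = (\<Sum>x\<in>A. measure_pmf.prob (pmf_of_set (permutations_of_set (A - {x})))
                (Cons x -` {es. set (take (Suc w) es) \<inter> T = {}})) / m"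
      using False Suc.prems by (simp add: integral_pmf_of_set m_def)
    also have "\<dots> \<le> (\<Sum>x\<in>A. (if x \<in> T then 0 else c)) / m"
      using le by (intro divide_right_mono sum_mono) auto
    also have "(\<Sum>x\<in>A. (if x \<in> T then 0 else c)) = (\<Sum>x\<in>A - T. c)"
      using Suc.prems by (simp add: sum.If_cases Diff_eq Int_commute)
    also have "\<dots> = real (m - t) * c"
      using Suc.prems fT by (simp add: card_Diff_subset m_def t_def)
    also have "real (m - t) * c / m \<le> (1 - real t / real m) ^ Suc w"
    proof (cases "t = m")
      case True then show ?thesis by simp
    next
      case False
      then have tm1: "t \<le> m - 1" using tm by simp
      have c1: "c \<le> (1 - real t / real m) ^ w"
      proof (cases "m = 1")
        case True then have "t = 0" using tm1 by simp
        then show ?thesis by (simp add: c_def)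
      next
        case False
        then have m1: "real (m - 1) > 0" using m0 by simp
        have B: "0 \<le> 1 - real t / real (m - 1)" using tm1 m1 by (simp add: field_simps)
        have AA: "1 - real t / real (m - 1) \<le> 1 - real t / real m"
          using m1 m0 by (intro diff_left_mono divide_left_mono) auto
        show ?thesis unfolding c_def by (rule power_mono[OF AA B])
      qed
      have "real (m - t) * c / m = (1 - real t / real m) * c"
        using m0 tm by (simp add: field_simps of_nat_diff)
      also have "\<dots> \<le> (1 - real t / real m) * (1 - real t / real m) ^ w"
        using c1 tm m0 by (intro mult_left_mono) (auto simp: field_simps)
      finally show ?thesis by simp
    qed
    finally show ?thesis by (simp add: m_def t_def)
  qed
qed

lemma perms_nonempty: "finite A \<Longrightarrow> permutations_of_set A \<noteq> {}"
  by (simp add: permutations_of_set_empty_iff)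

lemma rotate_perm_inv:
  assumes A: "finite A" and a: "a < card A"
  shows "map_pmf (rotate a) (pmf_of_set (permutations_of_set A)) = pmf_of_set (permutations_of_set A)"
proof -
  let ?P = "permutations_of_set A"
  have len: "xs \<in> ?P \<Longrightarrow> length xs = card A" for xs by (rule length_finite_permutations_of_set)
  have rback: "rotate (card A - a) (rotate a xs) = xs" if "xs \<in> ?P" for xs
    using len[OF that] a by (simp add: rotate_rotate rotate_id)
  have inj: "inj_on (rotate a) ?P"
    by (rule inj_on_inverseI[where g="rotate (card A - a)"]) (rule rback)
  have img: "rotate a ` ?P = ?P"
  proof
    show "rotate a ` ?P \<subseteq> ?P" by (auto simp: permutations_of_set_def)
    show "?P \<subseteq> rotate a ` ?P"
    proof
      fix xs assume xs: "xs \<in> ?P"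
      have "rotate a (rotate (card A - a) xs) = xs"
        using len[OF xs] a by (simp add: rotate_rotate rotate_id)
      moreover have "rotate (card A - a) xs \<in> ?P" using xs by (auto simp: permutations_of_set_def)
      ultimately show "xs \<in> rotate a ` ?P" by (metis image_eqI)
    qed
  qed
  show ?thesis
    using map_pmf_of_set_inj[OF inj perms_nonempty[OF A] finite_permutations_of_set] img by simp
qed

lemma window_avoid:
  assumes A: "finite A" and T: "T \<subseteq> A" and aw: "a + w \<le> card A"
  shows "measure_pmf.prob (pmf_of_set (permutations_of_set A))
           {es. \<forall>i. a \<le> i \<and> i < a + w \<longrightarrow> es ! i \<notin> T}
         \<le> (1 - real (card T) / real (card A)) ^ w"
proof (cases "w = 0")
  case True then show ?thesis by simp
next
  case False
  then have a: "a < card A" using aw by simp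
  let ?p = "pmf_of_set (permutations_of_set A)"
  have sp: "set_pmf ?p = permutations_of_set A"
    using A by (simp add: perms_nonempty finite_permutations_of_set)
  have "{es. \<forall>i. a \<le> i \<and> i < a + w \<longrightarrow> es ! i \<notin> T} \<inter> set_pmf ?p =
        {es. set (take w (rotate a es)) \<inter> T = {}} \<inter> set_pmf ?p"
  proof (rule set_eqI, rule iffI)
    fix es assume es: "es \<in> {es. \<forall>i. a \<le> i \<and> i < a + w \<longrightarrow> es ! i \<notin> T} \<inter> set_pmf ?p"
    then have l: "length es = card A" using sp length_finite_permutations_of_set by blast
    have r: "take w (rotate a es) = take w (drop a es)"
      using l a aw by (simp add: rotate_drop_take)
    have "set (take w (drop a es)) \<inter> T = {}"
    proof (rule ccontr)
      assume "set (take w (drop a es)) \<inter> T \<noteq> {}"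
      then obtain j where "j < length (take w (drop a es))" "take w (drop a es) ! j \<in> T"
        by (metis disjoint_iff in_set_conv_nth)
      then have "a + j < a + w" "es ! (a + j) \<in> T" using l aw by auto
      then show False using es by auto
    qed
    then show "es \<in> {es. set (take w (rotate a es)) \<inter> T = {}} \<inter> set_pmf ?p"
      using es r by simp
  next
    fix es assume es: "es \<in> {es. set (take w (rotate a es)) \<inter> T = {}} \<inter> set_pmf ?p"
    then have l: "length es = card A" using sp length_finite_permutations_of_set by blast
    have r: "take w (rotate a es) = take w (drop a es)"
      using l a aw by (simp add: rotate_drop_take)
    show "es \<in> {es. \<forall>i. a \<le> i \<and> i < a + w \<longrightarrow> es ! i \<notin> T} \<inter> set_pmf ?p"
    proof (clarsimp simp: es[THEN IntD2])
      fix i assume i: "a \<le> i" "i < a + w" "es ! i \<in> T"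
      have "es ! i \<in> set (take w (drop a es))"
        using i l aw by (auto simp: in_set_conv_nth intro!: exI[of _ "i - a"])
      moreover have "set (take w (drop a es)) \<inter> T = {}" using es r by simp
      ultimately show False using i(3) by blast
    qed
  qed
  note eqn = this
  have "measure_pmf.prob ?p {es. \<forall>i. a \<le> i \<and> i < a + w \<longrightarrow> es ! i \<notin> T} =
        measure_pmf.prob ?p ({es. \<forall>i. a \<le> i \<and> i < a + w \<longrightarrow> es ! i \<notin> T} \<inter> set_pmf ?p)"
    by (rule measure_Int_set_pmf[symmetric])
  also have "\<dots> = measure_pmf.prob ?p ({es. set (take w (rotate a es)) \<inter> T = {}} \<inter> set_pmf ?p)"
    by (simp only: eqn)
  also have "\<dots> = measure_pmf.prob ?p {es. set (take w (rotate a es)) \<inter> T = {}}"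
    by (rule measure_Int_set_pmf)
  also have "\<dots> = measure_pmf.prob (map_pmf (rotate a) ?p) {es. set (take w es) \<inter> T = {}}"
    by (simp add: measure_map_pmf vimage_def)
  also have "\<dots> = measure_pmf.prob ?p {es. set (take w es) \<inter> T = {}}"
    using rotate_perm_inv[OF A a] by simp
  also have "\<dots> \<le> (1 - real (card T) / real (card A)) ^ w"
    by (rule prefix_avoid[OF A T])
  finally show ?thesis .
qed


lemma tree_from_parent:
  fixes V :: "'a set" and root :: 'a and par :: "'a \<Rightarrow> 'a" and h :: "'a \<Rightarrow> nat"
  assumes fin: "finite V" and rt: "root \<in> V"
    and par: "\<And>x. x \<in> V \<Longrightarrow> x \<noteq> root \<Longrightarrow> par x \<in> V \<and> h (par x) < h x"
  shows "is_tree V ((\<lambda>x. {x, par x}) ` (V - {root}))"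
proof -
  define E where "E = (\<lambda>x. {x, par x}) ` (V - {root})"
  have sg: "simple_graph V E"
    unfolding simple_graph_def
  proof (intro conjI)
    show "finite V" by (rule fin)
    show "\<forall>e\<in>E. e \<subseteq> V \<and> card e = 2"
    proof
      fix e assume "e \<in> E"
      then obtain x where x: "x \<in> V" "x \<noteq> root" "e = {x, par x}" by (auto simp: E_def)
      have "par x \<noteq> x" using par[OF x(1,2)] by auto
      then show "e \<subseteq> V \<and> card e = 2" using x par[OF x(1,2)] by auto
    qed
  qed
  have symadj: "adj E u v \<Longrightarrow> adj E v u" for u v by (simp add: adj_def insert_commute)
  have tor: "(adj E)\<^sup>*\<^sup>* x root" if "x \<in> V" for x
    using that
  proof (induction "h x" arbitrary: x rule: less_induct)
    case less
    show ?case
    proof (cases "x = root")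
      case True then show ?thesis by simp
    next
      case False
      have a: "adj E x (par x)" using less.prems False by (auto simp: adj_def E_def)
      have "(adj E)\<^sup>*\<^sup>* (par x) root" using less.hyps par[OF less.prems False] by blast
      then show ?thesis using a by (meson converse_rtranclp_into_rtranclp)
    qed
  qed
  have sym: "symp (adj E)" using symadj by (auto intro: sympI)
  have conn: "connected_graph V E"
    unfolding connected_graph_def
  proof (intro conjI ballI)
    show "V \<noteq> {}" using rt by auto
    fix u v assume "u \<in> V" "v \<in> V"
    have "(adj E)\<^sup>*\<^sup>* root v" using tor[OF \<open>v \<in> V\<close>] symp_rtranclp[OF sym] by (meson sympD)
    then show "(adj E)\<^sup>*\<^sup>* u v" using tor[OF \<open>u \<in> V\<close>] by (rule rtranclp_trans[rotated])
  qed
  have key: "b = par a" if "adj E a b" "h b \<le> h a" for a b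
  proof -
    from that(1) obtain z where z: "z \<in> V" "z \<noteq> root" "{a, b} = {z, par z}"
      by (auto simp: adj_def E_def)
    have hz: "h (par z) < h z" using par[OF z(1,2)] by simp
    from z(3) have "(a = z \<and> b = par z) \<or> (a = par z \<and> b = z)" by (auto simp: doubleton_eq_iff)
    then show ?thesis using hz that(2) by auto
  qed
  have acyc: "acyclic_graph E"
    unfolding acyclic_graph_def
  proof
    assume "\<exists>cs. is_cycle E cs"
    then obtain cs where cyc: "is_cycle E cs" by blast
    define n where "n = length cs"
    have n3: "n \<ge> 3" and dist: "distinct cs"
      and cons: "\<And>i. Suc i < n \<Longrightarrow> adj E (cs ! i) (cs ! Suc i)"
      and la: "adj E (last cs) (hd cs)"
      using cyc by (auto simp: is_cycle_def n_def)
    define nx where "nx = (\<lambda>i. if Suc i < n then Suc i else 0)"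
    have cadj: "adj E (cs ! i) (cs ! nx i)" if "i < n" for i
    proof (cases "Suc i < n")
      case True then show ?thesis using cons by (simp add: nx_def)
    next
      case False
      then have "i = n - 1" using that by simp
      moreover have "cs \<noteq> []" using n3 n_def by auto
      then have "last cs = cs ! (n - 1)" "hd cs = cs ! 0"
        by (simp_all add: n_def last_conv_nth hd_conv_nth)
      ultimately show ?thesis using la False by (simp add: nx_def)
    qed
    define M where "M = Max ((\<lambda>j. h (cs ! j)) ` {..<n})"
    have "M \<in> (\<lambda>j. h (cs ! j)) ` {..<n}" unfolding M_def using n3 by (intro Max_in) (auto simp: lessThan_empty_iff)
    then obtain i0 where i0: "i0 < n" "h (cs ! i0) = M" by auto
    have mx: "h (cs ! j) \<le> h (cs ! i0)" if "j < n" for j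
      unfolding i0(2) M_def using that by (intro Max_ge) auto
    define pv where "pv = (if i0 = 0 then n - 1 else i0 - 1)"
    have pv: "pv < n" "nx pv = i0" using i0 n3 by (auto simp: pv_def nx_def)
    have nxl: "nx i0 < n" using n3 by (simp add: nx_def)
    have e1: "cs ! nx i0 = par (cs ! i0)" using key[OF cadj[OF i0(1)] mx[OF nxl]] .
    have "adj E (cs ! pv) (cs ! i0)" using cadj[OF pv(1)] pv(2) by simp
    then have e2: "cs ! pv = par (cs ! i0)" using key[OF symadj mx[OF pv(1)]] by blast
    have "cs ! nx i0 = cs ! pv" using e1 e2 by simp
    then have "nx i0 = pv" using dist nxl pv(1) by (simp add: n_def nth_eq_iff_index_eq)
    then show False using i0 n3 by (auto simp: nx_def pv_def split: if_splits)
  qed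
  show ?thesis using sg conn acyc by (simp add: is_tree_def E_def)
qed


lemma union_bound:
  assumes "finite I" "\<And>i. i \<in> I \<Longrightarrow> measure_pmf.prob p (A i) \<le> (b::real)"
  shows "measure_pmf.prob p (\<Union>i\<in>I. A i) \<le> real (card I) * b"
proof -
  have "measure_pmf.prob p (\<Union>i\<in>I. A i) \<le> (\<Sum>i\<in>I. measure_pmf.prob p (A i))"
    using assms(1) by (intro measure_pmf.finite_measure_subadditive_finite) auto
  also have "\<dots> \<le> (\<Sum>i\<in>I. b)" using assms(2) by (intro sum_mono) auto
  finally show ?thesis by simp
qed

lemma assembly:
  fixes E :: "'a set set" and root :: 'a and tp :: "'a \<Rightarrow> nat"
    and CE :: "'a \<Rightarrow> 'a set set" and GE :: "'a \<Rightarrow> nat \<Rightarrow> 'a set set" and Iv :: "'a set"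
    and L q r s :: nat
  defines "m \<equiv> card E"
  defines "th \<equiv> (\<lambda>k. k * m div L)"
  assumes finE: "finite E" and E2: "\<forall>e\<in>E. card e = 2"
    and Lpos: "L \<ge> 1"
    and finI: "finite Iv"
    and inI: "\<And>v. 1 \<le> tp v \<Longrightarrow> tp v \<le> L \<Longrightarrow> v \<in> Iv"
    and CE: "\<And>v e. 1 \<le> tp v \<Longrightarrow> tp v \<le> L \<Longrightarrow> e \<in> CE v \<Longrightarrow> \<exists>c. e = {v, c} \<and> c \<noteq> v \<and> tp c = tp v - 1"
    and GEsub: "\<And>v g. 1 \<le> tp v \<Longrightarrow> tp v \<le> L \<Longrightarrow> g < q \<Longrightarrow> GE v g \<subseteq> CE v \<inter> E"
    and GEcard: "\<And>v g. 1 \<le> tp v \<Longrightarrow> tp v \<le> L \<Longrightarrow> g < q \<Longrightarrow> s \<le> card (GE v g)"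
    and GEdisj: "\<And>v g g'. 1 \<le> tp v \<Longrightarrow> tp v \<le> L \<Longrightarrow> g < q \<Longrightarrow> g' < q \<Longrightarrow> g \<noteq> g' \<Longrightarrow> GE v g \<inter> GE v g' = {}"
    and qr: "L - 1 + r \<le> q"
    and troot: "tp root = L" and sm: "s \<le> m"
  shows "measure_pmf.prob (greedy_random_order E) {l. l root < L}
          \<le> card Iv * (q * (1 - real s / real m) ^ (m div L)) + card Iv * (1/2) ^ r"
proof -
  define I' where "I' = {v\<in>Iv. 1 \<le> tp v \<and> tp v \<le> L}"
  have finI': "finite I'" using finI by (simp add: I'_def)
  have cI': "card I' \<le> card Iv" using finI by (auto simp: I'_def intro!: card_mono)
  define P where "P = (\<lambda>es v. {i. th (tp v - 1) \<le> i \<and> i < th (tp v) \<and> es ! i \<in> CE v})"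
  define B where "B = (\<lambda>v g. {es. \<forall>i. th (tp v - 1) \<le> i \<and> i < th (tp v) \<longrightarrow> es ! i \<notin> GE v g})"
  define PB where "PB = (\<Union>v\<in>I'. \<Union>g\<in>{..<q}. B v g)"
  define \<beta> where "\<beta> = (1 - real s / real m) ^ (m div L)"
  let ?perm = "pmf_of_set (permutations_of_set E)"
  have sp: "set_pmf ?perm = permutations_of_set E"
    using finE by (simp add: perms_nonempty finite_permutations_of_set)
  have lenes: "length es = m" if "es \<in> permutations_of_set E" for es
    using that by (simp add: m_def length_finite_permutations_of_set)
  have th_le: "th k \<le> m" if "k \<le> L" for k
  proof -
    have "k * m \<le> L * m" using that by simp
    then have "k * m div L \<le> L * m div L" by (rule div_le_mono)
    then show ?thesis using Lpos by (simp add: th_def)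
  qed
  have thL: "th L = m" using Lpos by (simp add: th_def)
  have monoth: "mono th" unfolding th_def by (intro monoI div_le_mono mult_right_mono) auto
  have wlen: "m div L \<le> th k - th (k - 1)" if "1 \<le> k" for k
  proof -
    have "k * m = (k - 1) * m + m" using that by (cases k) auto
    then have "th k = ((k - 1) * m + m) div L" by (simp add: th_def)
    moreover have "(k - 1) * m div L + m div L \<le> ((k - 1) * m + m) div L" by (subst div_add1_eq) simp
    ultimately show ?thesis by (simp add: th_def)
  qed
  have PBbound: "measure_pmf.prob ?perm PB \<le> card I' * (q * \<beta>)"
    unfolding PB_def
  proof (rule union_bound[OF finI'])
    fix v assume v: "v \<in> I'"
    then have tv: "1 \<le> tp v" "tp v \<le> L" by (auto simp: I'_def)
    show "measure_pmf.prob ?perm (\<Union>g\<in>{..<q}. B v g) \<le> q * \<beta>"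
    proof -
      have "measure_pmf.prob ?perm (\<Union>g\<in>{..<q}. B v g) \<le> card {..<q} * \<beta>"
      proof (rule union_bound)
        fix g assume g: "g \<in> {..<q}"
        have T: "GE v g \<subseteq> E" using GEsub[OF tv] g by auto
        have cT: "s \<le> card (GE v g)" using GEcard[OF tv] g by auto
        have cTm: "card (GE v g) \<le> m" using T finE by (simp add: m_def card_mono)
        have aw: "th (tp v - 1) + (th (tp v) - th (tp v - 1)) \<le> card E"
          using th_le[OF tv(2)] monoth by (simp add: m_def monoD)
        have "measure_pmf.prob ?perm (B v g) =
              measure_pmf.prob ?perm {es. \<forall>i. th (tp v - 1) \<le> i \<and> i < th (tp v - 1) + (th (tp v) - th (tp v - 1)) \<longrightarrow> es ! i \<notin> GE v g}"
        proof -
          have "th (tp v - 1) \<le> th (tp v)" using monoth by (simp add: monoD)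
          then show ?thesis by (simp add: B_def)
        qed
        also have "\<dots> \<le> (1 - real (card (GE v g)) / real (card E)) ^ (th (tp v) - th (tp v - 1))"
          by (rule window_avoid[OF finE T aw])
        also have "\<dots> \<le> (1 - real s / real m) ^ (th (tp v) - th (tp v - 1))"
        proof (rule power_mono)
          show "1 - real (card (GE v g)) / real (card E) \<le> 1 - real s / real m"
            using cT by (simp add: m_def divide_right_mono)
          show "0 \<le> 1 - real (card (GE v g)) / real (card E)"
            using cTm by (cases "m = 0") (auto simp: m_def field_simps)
        qed
        also have "\<dots> \<le> \<beta>"
          unfolding \<beta>_def
        proof (rule power_decreasing)
          show "m div L \<le> th (tp v) - th (tp v - 1)" using wlen tv by simp
          have "s \<le> m" using cT cTm by simp
          then show "0 \<le> 1 - real s / real m" "1 - real s / real m \<le> 1"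
            by (cases "m = 0") (auto simp: field_simps)
        qed
        finally show "measure_pmf.prob ?perm (B v g) \<le> \<beta>" .
      qed simp
      then show ?thesis by simp
    qed
  qed
  define f where "f = (\<lambda>es. measure_pmf.prob (greedy_ch es (\<lambda>_. 0)) {xs. ld (\<lambda>_. 0) xs (length xs) root < L})"
  have fbound: "f es \<le> indicator PB es + card I' * (1/2) ^ r" if es: "es \<in> permutations_of_set E" for es
  proof (cases "es \<in> PB")
    case True
    have "f es \<le> 1" by (simp add: f_def)
    moreover have "0 \<le> real (card I') * (1/2) ^ r" by simp
    ultimately have "f es \<le> 1 + real (card I') * (1/2) ^ r" by linarith
    then show ?thesis using True by simp
  next
    case False
    have les: "length es = m" using lenes[OF es] .
    have setes: "set es = E" using es by (simp add: permutations_of_set_def)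
    have edges: "\<forall>e\<in>set es. finite e \<and> e \<noteq> {}"
    proof
      fix e assume "e \<in> set es"
      then have "card e = 2" using E2 setes by auto
      then show "finite e \<and> e \<noteq> {}" using card.infinite by fastforce
    qed
    have G1: "(tp v - 1) + r \<le> card (P es v)" if tv: "1 \<le> tp v" "tp v \<le> L" for v
    proof -
      have vI: "v \<in> I'" using inI tv by (simp add: I'_def)
      have hit: "\<exists>i. th (tp v - 1) \<le> i \<and> i < th (tp v) \<and> es ! i \<in> GE v g" if g: "g < q" for g
        using False vI g by (auto simp: PB_def B_def)
      obtain ig where ig: "\<And>g. g < q \<Longrightarrow> th (tp v - 1) \<le> ig g \<and> ig g < th (tp v) \<and> es ! ig g \<in> GE v g"
        using hit by metis
      have inj: "inj_on ig {..<q}"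
      proof (rule inj_onI)
        fix g g' assume "g \<in> {..<q}" "g' \<in> {..<q}" "ig g = ig g'"
        then show "g = g'" using ig GEdisj[OF tv] by (metis disjoint_iff lessThan_iff)
      qed
      have sub: "ig ` {..<q} \<subseteq> P es v" using ig GEsub[OF tv] by (auto simp: P_def)
      have finP: "finite (P es v)"
        by (rule finite_subset[of _ "{..<th (tp v)}"]) (auto simp: P_def)
      have "q \<le> card (P es v)" using card_mono[OF finP sub] card_image[OF inj] by simp
      then show ?thesis using qr tv by simp
    qed
    have sub: "{xs. ld (\<lambda>_. 0) xs (length xs) root < L} \<inter> set_pmf (greedy_ch es (\<lambda>_. 0))
        \<subseteq> (\<Union>v\<in>I'. TLev (\<lambda>_. 0) es v (P es v) r)"
    proof
      fix xs assume xs: "xs \<in> {xs. ld (\<lambda>_. 0) xs (length xs) root < L} \<inter> set_pmf (greedy_ch es (\<lambda>_. 0))"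
      show "xs \<in> (\<Union>v\<in>I'. TLev (\<lambda>_. 0) es v (P es v) r)"
      proof (rule ccontr)
        assume nt: "xs \<notin> (\<Union>v\<in>I'. TLev (\<lambda>_. 0) es v (P es v) r)"
        have sup: "length xs = length es \<and> (\<forall>i<length es. xs ! i \<in> minset (es ! i) (ld (\<lambda>_. 0) xs i))"
          using greedy_ch_support[of xs es] xs edges by blast
        have G2: "xs \<notin> TLev (\<lambda>_. 0) es v (P es v) r" if "1 \<le> tp v" "tp v \<le> L" for v
          using nt inI that by (auto simp: I'_def)
        have "tp root \<le> cnt xs (th (tp root)) root"
          using det_core[where es=es and xs=xs and th=th and tp=tp and CE=CE and L=L and r=r and v=root] sup CE monoth thL les G1 G2 troot
          unfolding P_def by simp
        then have "L \<le> cnt xs m root" using troot thL by simp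
        then have "L \<le> ld (\<lambda>_. 0) xs (length xs) root" using sup les by (simp add: ld_def)
        then show False using xs by simp
      qed
    qed
    have "f es = measure_pmf.prob (greedy_ch es (\<lambda>_. 0))
        ({xs. ld (\<lambda>_. 0) xs (length xs) root < L} \<inter> set_pmf (greedy_ch es (\<lambda>_. 0)))"
      by (simp add: f_def measure_Int_set_pmf)
    also have "\<dots> \<le> measure_pmf.prob (greedy_ch es (\<lambda>_. 0)) (\<Union>v\<in>I'. TLev (\<lambda>_. 0) es v (P es v) r)"
      using sub by (rule measure_pmf.finite_measure_mono) simp
    also have "\<dots> \<le> card I' * (1/2) ^ r"
    proof (rule union_bound[OF finI'])
      fix v assume v: "v \<in> I'"
      have "P es v \<subseteq> {..<length es}"
        using th_le v les by (auto simp: P_def I'_def) (meson order_less_le_trans)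
      then show "measure_pmf.prob (greedy_ch es (\<lambda>_. 0)) (TLev (\<lambda>_. 0) es v (P es v) r) \<le> (1/2) ^ r"
        by (rule coin_lemma)
    qed
    finally show ?thesis using False by simp
  qed
  have finP: "finite (set_pmf ?perm)" using sp by (simp add: finite_permutations_of_set)
  have "measure_pmf.prob (greedy_random_order E) {l. l root < L} = measure_pmf.expectation ?perm f"
    unfolding greedy_random_order_def prob_bind_pmf f_def greedy_run_ch
    by (simp add: measure_map_pmf vimage_def)
  also have "\<dots> \<le> measure_pmf.expectation ?perm (\<lambda>es. indicator PB es + card I' * (1/2) ^ r)"
    by (rule integral_mono_AE) (auto intro!: integrable_measure_pmf_finite[OF finP] AE_pmfI fbound simp: sp)
  also have "\<dots> = measure_pmf.prob ?perm PB + card I' * (1/2) ^ r"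
    by (subst Bochner_Integration.integral_add) (auto intro!: integrable_measure_pmf_finite[OF finP])
  also have "\<dots> \<le> card I' * (q * \<beta>) + card I' * (1/2) ^ r"
    using PBbound by simp
  also have "\<dots> \<le> card Iv * (q * \<beta>) + card Iv * (1/2) ^ r"
  proof -
    have "0 \<le> \<beta>"
    proof (cases "m = 0")
      case True then show ?thesis by (simp add: \<beta>_def)
    next
      case False
      then show ?thesis using sm by (simp add: \<beta>_def field_simps)
    qed
    then show ?thesis using cI' by (intro add_mono mult_right_mono) auto
  qed
  finally show ?thesis by (simp add: \<beta>_def)
qed


definition "Lp j = (2::nat) ^ j"
definition "ap j = 5 * (j::nat)"
definition "rp j = (ap j + 2) * Lp j"
definition "qp j = Lp j + rp j"
definition "sp j = Lp j * ((ap j + 2) * Lp j + qp j + 2)"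
definition "Dp j = qp j * sp j"
definition "Vt j = prod_encode ` {(d, i). d \<le> Lp j \<and> i < Dp j ^ d}"
definition "rt = prod_encode (0, 0)"
definition "dep x = fst (prod_decode x)"
definition "idx x = snd (prod_decode x)"
definition "prt j x = prod_encode (dep x - 1, idx x div Dp j)"
definition "Et j = (\<lambda>x. {x, prt j x}) ` (Vt j - {rt})"
definition "tpt j x = (if x \<in> Vt j then Lp j - dep x else Lp j + 1)"
definition "CEt j v = {{c, v} | c. c \<in> Vt j \<and> c \<noteq> rt \<and> prt j c = v}"
definition "GEt j v g = (\<lambda>t. {prod_encode (dep v + 1, idx v * Dp j + t), v}) ` {g * sp j ..< (g + 1) * sp j}"

lemma enc_dec: "prod_encode (dep x, idx x) = x"
  by (simp add: dep_def idx_def)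

lemma dep_enc[simp]: "dep (prod_encode (d, i)) = d" and idx_enc[simp]: "idx (prod_encode (d, i)) = i"
  by (simp_all add: dep_def idx_def)

lemma inVt: "x \<in> Vt j \<longleftrightarrow> dep x \<le> Lp j \<and> idx x < Dp j ^ dep x"
proof
  assume "x \<in> Vt j" then show "dep x \<le> Lp j \<and> idx x < Dp j ^ dep x" by (auto simp: Vt_def)
next
  assume "dep x \<le> Lp j \<and> idx x < Dp j ^ dep x"
  then have "(dep x, idx x) \<in> {(d, i). d \<le> Lp j \<and> i < Dp j ^ d}" by simp
  then show "x \<in> Vt j" unfolding Vt_def using enc_dec[of x] by (metis image_eqI)
qed

lemma Lp_ge: "Lp j \<ge> 1" by (simp add: Lp_def)
lemma qp_ge: "qp j \<ge> 2" using Lp_ge[of j] by (simp add: qp_def rp_def)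
lemma sp_ge: "sp j \<ge> 2" using Lp_ge[of j] by (simp add: sp_def)
lemma Dp_ge: "Dp j \<ge> 4"
proof -
  have "2 * 2 \<le> qp j * sp j" using qp_ge[of j] sp_ge[of j] by (intro mult_le_mono) auto
  then show ?thesis by (simp add: Dp_def)
qed

lemma finVt: "finite (Vt j)"
proof -
  have "{(d, i). d \<le> Lp j \<and> i < Dp j ^ d} \<subseteq> {..Lp j} \<times> {..<Dp j ^ Lp j}"
  proof
    fix p assume "p \<in> {(d, i). d \<le> Lp j \<and> i < Dp j ^ d}"
    then obtain d i where p: "p = (d, i)" "d \<le> Lp j" "i < Dp j ^ d" by auto
    have "Dp j ^ d \<le> Dp j ^ Lp j" using p(2) Dp_ge[of j] by (intro power_increasing) auto
    then show "p \<in> {..Lp j} \<times> {..<Dp j ^ Lp j}" using p by auto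
  qed
  then have "finite {(d, i). d \<le> Lp j \<and> i < Dp j ^ d}" by (rule finite_subset) auto
  then show ?thesis by (simp add: Vt_def)
qed

lemma rt_in: "rt \<in> Vt j" by (simp add: inVt rt_def)

lemma dep_pos: assumes "x \<in> Vt j" "x \<noteq> rt" shows "dep x \<ge> 1"
proof (rule ccontr)
  assume "\<not> dep x \<ge> 1"
  then have d: "dep x = 0" by simp
  then have "idx x = 0" using assms(1) by (simp add: inVt)
  then have "x = prod_encode (0, 0)" using d enc_dec[of x] by simp
  then show False using assms(2) by (simp add: rt_def)
qed

lemma part_in: assumes "x \<in> Vt j" "x \<noteq> rt" shows "prt j x \<in> Vt j \<and> dep (prt j x) < dep x"
proof -
  have d: "dep x \<ge> 1" using dep_pos assms by blast
  obtain d' where d': "dep x = Suc d'" using d by (cases "dep x") auto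
  have i: "idx x < Dp j * Dp j ^ (dep x - 1)" using assms(1) d' by (simp add: inVt)
  have "idx x div Dp j < Dp j ^ (dep x - 1)"
    using i Dp_ge[of j] by (simp add: div_less_iff_less_mult mult.commute)
  then show ?thesis using assms d by (auto simp: prt_def inVt)
qed

lemma tree_t: "is_tree (Vt j) (Et j)"
  unfolding Et_def
  by (rule tree_from_parent[OF finVt rt_in, where h=dep]) (use part_in in blast)

lemma child_in:
  assumes v: "v \<in> Vt j" "dep v < Lp j" and t: "t < Dp j"
  defines "c \<equiv> prod_encode (dep v + 1, idx v * Dp j + t)"
  shows "c \<in> Vt j" "c \<noteq> rt" "prt j c = v" "c \<noteq> v" "{c, v} \<in> Et j" "{c, v} \<in> CEt j v"
proof -
  have iv: "idx v < Dp j ^ dep v" using v inVt by blast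
  have "idx v * Dp j + t < (idx v + 1) * Dp j" using t by simp
  also have "\<dots> \<le> Dp j ^ dep v * Dp j" using iv by (intro mult_right_mono) auto
  finally have "idx v * Dp j + t < Dp j ^ (dep v + 1)" by (simp add: mult.commute)
  then show cV: "c \<in> Vt j" using v by (simp add: c_def inVt)
  show cr: "c \<noteq> rt" by (simp add: c_def rt_def)
  have "(idx v * Dp j + t) div Dp j = idx v" using t Dp_ge[of j] by simp
  then show pc: "prt j c = v" by (simp add: c_def prt_def enc_dec)
  have "dep c = dep v + 1" by (simp add: c_def)
  then show "c \<noteq> v" by auto
  have "{c, v} = (\<lambda>x. {x, prt j x}) c" using pc by simp
  then show "{c, v} \<in> Et j" using cV cr by (auto simp: Et_def)
  show "{c, v} \<in> CEt j v" using cV cr pc by (auto simp: CEt_def)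
qed


lemma tpt_range:
  assumes "1 \<le> tpt j v" "tpt j v \<le> Lp j"
  shows "v \<in> Vt j" "dep v < Lp j" "tpt j v = Lp j - dep v"
proof -
  show v: "v \<in> Vt j" using assms by (auto simp: tpt_def split: if_splits)
  then show "tpt j v = Lp j - dep v" by (simp add: tpt_def)
  then show "dep v < Lp j" using assms by simp
qed

lemma child_inj:
  assumes "v \<in> Vt j" "dep v < Lp j" "t < Dp j" "t' < Dp j"
    "{prod_encode (dep v + 1, idx v * Dp j + t), v} = {prod_encode (dep v + 1, idx v * Dp j + t'), v}"
  shows "t = t'"
proof -
  have "prod_encode (dep v + 1, idx v * Dp j + t) \<noteq> v" "prod_encode (dep v + 1, idx v * Dp j + t') \<noteq> v"
    using child_in(4) assms by blast+
  then have "prod_encode (dep v + 1, idx v * Dp j + t) = prod_encode (dep v + 1, idx v * Dp j + t')"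
    using assms(5) by (metis doubleton_eq_iff)
  then show ?thesis by (simp add: prod_encode_eq)
qed

lemma grp_lt: "t \<in> {g * sp j ..< (g + 1) * sp j} \<Longrightarrow> g < qp j \<Longrightarrow> t < Dp j"
proof -
  assume t: "t \<in> {g * sp j ..< (g + 1) * sp j}" and g: "g < qp j"
  have "(g + 1) * sp j \<le> qp j * sp j" using g by (intro mult_right_mono) auto
  then show ?thesis using t by (simp add: Dp_def)
qed

lemma GE_props:
  assumes "1 \<le> tpt j v" "tpt j v \<le> Lp j" "g < qp j"
  shows "GEt j v g \<subseteq> CEt j v \<inter> Et j" "sp j \<le> card (GEt j v g)"
proof -
  have v: "v \<in> Vt j" "dep v < Lp j" using tpt_range assms by auto
  show "GEt j v g \<subseteq> CEt j v \<inter> Et j"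
    using child_in(5,6)[OF v grp_lt[OF _ assms(3)]] by (auto simp: GEt_def)
  have "inj_on (\<lambda>t. {prod_encode (dep v + 1, idx v * Dp j + t), v}) {g * sp j ..< (g + 1) * sp j}"
    using child_inj[OF v] grp_lt[OF _ assms(3)] by (auto intro!: inj_onI)
  then have "card (GEt j v g) = sp j" by (simp add: GEt_def card_image)
  then show "sp j \<le> card (GEt j v g)" by simp
qed

lemma GE_disj:
  assumes "1 \<le> tpt j v" "tpt j v \<le> Lp j" "g < qp j" "g' < qp j" "g \<noteq> g'"
  shows "GEt j v g \<inter> GEt j v g' = {}"
proof -
  have v: "v \<in> Vt j" "dep v < Lp j" using tpt_range assms by auto
  have A: "t = t'" if "t \<in> {g * sp j ..< (g + 1) * sp j}" "t' \<in> {g' * sp j ..< (g' + 1) * sp j}"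
      "{prod_encode (dep v + 1, idx v * Dp j + t), v} = {prod_encode (dep v + 1, idx v * Dp j + t'), v}" for t t'
    using child_inj[OF v] grp_lt[OF that(1) assms(3)] grp_lt[OF that(2) assms(4)] that(3) by blast
  have B: "t \<noteq> t'" if "t \<in> {g * sp j ..< (g + 1) * sp j}" "t' \<in> {g' * sp j ..< (g' + 1) * sp j}" for t t'
  proof
    assume "t = t'"
    then have "t div sp j = g" "t div sp j = g'" using that sp_ge[of j]
      by (auto simp: div_nat_eqI mult.commute)
    then show False using assms(5) by simp
  qed
  show ?thesis
  proof (rule equals0I)
    fix e assume "e \<in> GEt j v g \<inter> GEt j v g'"
    then obtain t t' where t: "t \<in> {g * sp j ..< (g + 1) * sp j}" "t' \<in> {g' * sp j ..< (g' + 1) * sp j}"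
      "e = {prod_encode (dep v + 1, idx v * Dp j + t), v}" "e = {prod_encode (dep v + 1, idx v * Dp j + t'), v}"
      unfolding GEt_def by blast
    then show False using A[OF t(1,2)] B[OF t(1,2)] by simp
  qed
qed

lemma CE_prop:
  assumes "1 \<le> tpt j v" "tpt j v \<le> Lp j" "e \<in> CEt j v"
  shows "\<exists>c. e = {v, c} \<and> c \<noteq> v \<and> tpt j c = tpt j v - 1"
proof -
  have v: "v \<in> Vt j" "dep v < Lp j" "tpt j v = Lp j - dep v" using tpt_range assms by auto
  obtain c where c: "e = {c, v}" "c \<in> Vt j" "c \<noteq> rt" "prt j c = v" using assms(3) by (auto simp: CEt_def)
  have dc: "dep c \<ge> 1" using dep_pos c by blast
  have dv: "dep v = dep c - 1" using c(4) by (auto simp: prt_def)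
  have "tpt j c = Lp j - dep c" using c(2) by (simp add: tpt_def)
  then have "tpt j c = tpt j v - 1" using v dv dc by simp
  moreover have "c \<noteq> v" using dv dc by auto
  ultimately show ?thesis using c(1) by blast
qed

lemma prob_bound_raw:
  "measure_pmf.prob (greedy_random_order (Et j)) {l. l rt < Lp j}
     \<le> card (Vt j) * (qp j * (1 - real (sp j) / real (card (Et j))) ^ (card (Et j) div Lp j))
       + card (Vt j) * (1/2) ^ rp j"
proof (rule assembly[where tp="tpt j" and CE="CEt j" and GE="GEt j"])
  show "finite (Et j)" by (simp add: Et_def finVt)
  show "\<forall>e\<in>Et j. card e = 2" using tree_t[of j] by (auto simp: is_tree_def simple_graph_def)
  show "Lp j \<ge> 1" by (rule Lp_ge)
  show "finite (Vt j)" by (rule finVt)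
  show "\<And>v. 1 \<le> tpt j v \<Longrightarrow> tpt j v \<le> Lp j \<Longrightarrow> v \<in> Vt j" using tpt_range by blast
  show "\<And>v e. 1 \<le> tpt j v \<Longrightarrow> tpt j v \<le> Lp j \<Longrightarrow> e \<in> CEt j v \<Longrightarrow> \<exists>c. e = {v, c} \<and> c \<noteq> v \<and> tpt j c = tpt j v - 1"
    by (rule CE_prop)
  show "\<And>v g. 1 \<le> tpt j v \<Longrightarrow> tpt j v \<le> Lp j \<Longrightarrow> g < qp j \<Longrightarrow> GEt j v g \<subseteq> CEt j v \<inter> Et j"
    using GE_props by blast
  show "\<And>v g. 1 \<le> tpt j v \<Longrightarrow> tpt j v \<le> Lp j \<Longrightarrow> g < qp j \<Longrightarrow> sp j \<le> card (GEt j v g)"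
    using GE_props by blast
  show "\<And>v g g'. 1 \<le> tpt j v \<Longrightarrow> tpt j v \<le> Lp j \<Longrightarrow> g < qp j \<Longrightarrow> g' < qp j \<Longrightarrow> g \<noteq> g' \<Longrightarrow> GEt j v g \<inter> GEt j v g' = {}"
    by (rule GE_disj)
  show "Lp j - 1 + rp j \<le> qp j" by (simp add: qp_def)
  show tr: "tpt j rt = Lp j" using rt_in by (simp add: tpt_def rt_def)
  have "1 \<le> tpt j rt" "tpt j rt \<le> Lp j" using tr Lp_ge by auto
  moreover have "0 < qp j" using qp_ge[of j] by simp
  ultimately have "GEt j rt 0 \<subseteq> Et j" "sp j \<le> card (GEt j rt 0)" using GE_props by blast+
  then show "sp j \<le> card (Et j)"
    using card_mono[OF \<open>finite (Et j)\<close>] by (meson order_trans)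
qed


lemma poly_exp: "j \<ge> 6 \<Longrightarrow> (5 * j + 3) * (10 * j + 7) \<le> (4::nat) ^ j"
proof (induction j rule: dec_induct)
  case base then show ?case by simp
next
  case (step n)
  have "(5 * Suc n + 3) * (10 * Suc n + 7) \<le> 4 * ((5 * n + 3) * (10 * n + 7))"
    apply (simp add: algebra_simps)
    using step.hyps by linarith
  also have "\<dots> \<le> 4 * 4 ^ n" using step.IH by simp
  finally show ?case by simp
qed

lemma Dp_le: assumes "j \<ge> 6" shows "Dp j \<le> 2 ^ ap j"
proof -
  define L where "L = Lp j"
  define a where "a = ap j"
  have L2: "2 \<le> 2 * L" using Lp_ge[of j] by (simp add: L_def)
  have "Dp j = ((a + 3) * L) * (L * ((2 * a + 5) * L + 2))"
    by (simp add: Dp_def qp_def sp_def rp_def L_def a_def algebra_simps)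
  also have "\<dots> \<le> ((a + 3) * L) * (L * ((2 * a + 5) * L + 2 * L))"
    using L2 by (intro mult_left_mono add_left_mono) auto
  also have "\<dots> = (a + 3) * (2 * a + 7) * L ^ 3"
    by (simp add: algebra_simps power3_eq_cube)
  also have "L ^ 3 = 8 ^ j"
  proof -
    have "L ^ 3 = (2::nat) ^ (j * 3)" by (simp add: L_def Lp_def power_mult)
    also have "\<dots> = (2 ^ 3) ^ j" by (simp only: mult.commute[of j 3] power_mult)
    finally show ?thesis by simp
  qed
  also have "(a + 3) * (2 * a + 7) = (5 * j + 3) * (10 * j + 7)" by (simp add: a_def ap_def)
  also have "(5 * j + 3) * (10 * j + 7) * 8 ^ j \<le> 4 ^ j * 8 ^ j"
    using poly_exp[OF assms] by simp
  also have "(4::nat) ^ j * 8 ^ j = 2 ^ a"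
  proof -
    have "(4::nat) ^ j * 8 ^ j = (4 * 8) ^ j" by (simp only: power_mult_distrib)
    also have "\<dots> = (2 ^ 5) ^ j" by simp
    also have "\<dots> = 2 ^ (5 * j)" by (simp only: power_mult)
    finally show ?thesis by (simp add: a_def ap_def)
  qed
  finally show ?thesis by (simp add: a_def)
qed



lemma card_V_le: "card (Vt j) \<le> (Lp j + 1) * Dp j ^ Lp j"
proof -
  have sub: "{(d, i). d \<le> Lp j \<and> i < Dp j ^ d} \<subseteq> {..Lp j} \<times> {..<Dp j ^ Lp j}"
  proof
    fix p assume "p \<in> {(d, i). d \<le> Lp j \<and> i < Dp j ^ d}"
    then obtain d i where p: "p = (d, i)" "d \<le> Lp j" "i < Dp j ^ d" by auto
    have "Dp j ^ d \<le> Dp j ^ Lp j" using p(2) Dp_ge[of j] by (intro power_increasing) auto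
    then show "p \<in> {..Lp j} \<times> {..<Dp j ^ Lp j}" using p by auto
  qed
  have "card (Vt j) \<le> card {(d, i). d \<le> Lp j \<and> i < Dp j ^ d}" unfolding Vt_def by (rule card_image_le) (rule finite_subset[OF sub], simp)
  also have "\<dots> \<le> card ({..Lp j} \<times> {..<Dp j ^ Lp j})" by (rule card_mono[OF _ sub]) simp
  finally show ?thesis by (simp add: card_cartesian_product)
qed

lemma card_V_ge: "Dp j ^ Lp j \<le> card (Vt j)"
proof -
  have "prod_encode ` ({Lp j} \<times> {..<Dp j ^ Lp j}) \<subseteq> Vt j" by (auto simp: Vt_def)
  then have "card (prod_encode ` ({Lp j} \<times> {..<Dp j ^ Lp j})) \<le> card (Vt j)" by (rule card_mono[OF finVt])
  moreover have "card (prod_encode ` ({Lp j} \<times> {..<Dp j ^ Lp j})) = Dp j ^ Lp j"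
    by (subst card_image) (auto simp: inj_on_def prod_encode_eq card_cartesian_product)
  ultimately show ?thesis by simp
qed

lemma card_V_le2: assumes "j \<ge> 6" shows "card (Vt j) \<le> 2 ^ ((ap j + 1) * Lp j)"
proof -
  have "Lp j + 1 \<le> 2 ^ Lp j" by (simp add: Suc_le_eq less_exp)
  moreover have "Dp j ^ Lp j \<le> (2 ^ ap j) ^ Lp j" using Dp_le[OF assms] by (rule power_mono) simp
  ultimately have "(Lp j + 1) * Dp j ^ Lp j \<le> 2 ^ Lp j * (2 ^ ap j) ^ Lp j" by (rule mult_le_mono)
  also have "\<dots> = 2 ^ ((ap j + 1) * Lp j)" by (simp add: power_mult[symmetric] power_add algebra_simps)
  finally show ?thesis using card_V_le[of j] by linarith
qed



lemma beta_bound: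
  fixes s m L :: nat
  assumes "s \<le> m" "0 < m" "0 < L"
  shows "(1 - real s / real m) ^ (m div L) \<le> exp (1 - real s / real L)"
proof -
  define x where "x = real s / real m"
  have x01: "0 \<le> x" "x \<le> 1" using assms by (auto simp: x_def field_simps)
  have "(1 - x) ^ (m div L) \<le> exp (- x) ^ (m div L)"
    using x01 exp_minus_ge[of x] by (intro power_mono) auto
  also have "\<dots> = exp (- x * real (m div L))" by (rule exp_of_nat2_mult[symmetric])
  also have "\<dots> \<le> exp (1 - real s / real L)"
  proof -
    have e1: "m div L * L + m mod L = m" by (rule div_mult_mod_eq)
    have e2: "m mod L < L" using assms(3) by simp
    have "m < m div L * L + L" using e1 e2 by linarith
    then have "real m < real (m div L * L + L)" by (simp only: of_nat_less_iff)
    then have "real m < real (m div L) * real L + real L" by simp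
    then have "real m / real L - 1 < real (m div L)" using assms(3) by (simp add: field_simps)
    then have "x * (real m / real L - 1) \<le> x * real (m div L)" using x01 by (intro mult_left_mono) auto
    moreover have "x * (real m / real L - 1) = real s / real L - x" using assms by (simp add: x_def field_simps)
    ultimately show ?thesis using x01 by simp
  qed
  finally show ?thesis by (simp add: x_def)
qed

lemma exp_half: "exp (- real N) \<le> (1/2) ^ N"
proof -
  have "exp (-1) ^ N = exp (-1 * real N)" by (rule exp_of_nat2_mult[symmetric])
  then have "exp (- real N) = exp (-1) ^ N" by simp
  also have "\<dots> \<le> (1/2) ^ N"
  proof (rule power_mono)
    have "2 \<le> exp (1::real)" using exp_ge_add_one_self[of 1] by simp
    then show "exp (-1) \<le> (1/2::real)" by (simp add: exp_minus field_simps)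
  qed simp
  finally show ?thesis .
qed


lemma prob_root_small:
  assumes "j \<ge> 6"
  shows "measure_pmf.prob (greedy_random_order (Et j)) {l. l rt < Lp j} \<le> 2 * (1/2) ^ Lp j"
proof -
  define n where "n = card (Vt j)"
  define m where "m = card (Et j)"
  define L where "L = Lp j"
  define a where "a = ap j"
  define q where "q = qp j"
  have sm: "sp j \<le> m"
  proof -
    have tr: "tpt j rt = Lp j" using rt_in[of j] by (simp add: tpt_def rt_def)
    have t1: "1 \<le> tpt j rt" and t2: "tpt j rt \<le> Lp j" using Lp_ge[of j] unfolding tr by auto
    have q0: "0 < qp j" using qp_ge[of j] by simp
    have g1: "GEt j rt 0 \<subseteq> Et j" using GE_props(1)[OF t1 t2 q0] by simp
    have g2: "sp j \<le> card (GEt j rt 0)" using GE_props(2)[OF t1 t2 q0] .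
    have fE: "finite (Et j)" by (simp add: Et_def finVt)
    have "card (GEt j rt 0) \<le> card (Et j)" using card_mono[OF fE g1] .
    then show ?thesis unfolding m_def using g2 by linarith
  qed
  have m0: "0 < m" using sm sp_ge[of j] by simp
  have L0: "0 < L" using Lp_ge[of j] by (simp add: L_def)
  have n_le: "real n \<le> 2 ^ ((a + 1) * L)"
    using card_V_le2[OF assms] by (simp add: n_def a_def L_def)
  have sL: "real (sp j) / real L = real ((a + 2) * L + q + 2)"
  proof -
    have "sp j = L * ((a + 2) * L + q + 2)" by (simp add: sp_def L_def a_def q_def)
    then have "real (sp j) = real L * real ((a + 2) * L + q + 2)" by (metis of_nat_mult)
    then show ?thesis using L0 by simp
  qed
  have beta0: "(1 - real (sp j) / real m) ^ (m div L) \<le> exp (1 - real ((a + 2) * L + q + 2))"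
    using beta_bound[OF sm m0 L0] unfolding sL .
  have "1 - real ((a + 2) * L + q + 2) = (- real ((a + 2) * L) - real q - 1)" by simp
  then have beta: "(1 - real (sp j) / real m) ^ (m div L) \<le> exp (- real ((a + 2) * L) - real q - 1)"
    using beta0 by metis
  have qe: "real q * exp (- real q) \<le> 1"
  proof -
    have "real q \<le> exp (real q)" using exp_ge_add_one_self[of "real q"] by linarith
    then show ?thesis by (simp add: exp_minus field_simps)
  qed
  have "real q * (1 - real (sp j) / real m) ^ (m div L) \<le> real q * exp (- real ((a + 2) * L) - real q - 1)"
    using beta by (intro mult_left_mono) auto
  also have "\<dots> = (real q * exp (- real q)) * exp (- real ((a + 2) * L)) * exp (-1)"
  proof -
    have "exp (- real ((a + 2) * L) - real q - 1) = exp (- real q) * exp (- real ((a + 2) * L)) * exp (-1)"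
      by (simp only: exp_add[symmetric] diff_conv_add_uminus) (simp add: algebra_simps)
    then show ?thesis by simp
  qed
  also have "\<dots> \<le> 1 * exp (- real ((a + 2) * L)) * 1"
    using qe by (intro mult_mono) auto
  also have "\<dots> \<le> (1/2) ^ ((a + 2) * L)" unfolding mult_1 mult_1_right by (rule exp_half)
  finally have T1: "real q * (1 - real (sp j) / real m) ^ (m div L) \<le> (1/2) ^ ((a + 2) * L)" .
  have key: "(2::real) ^ ((a + 1) * L) * (1/2) ^ ((a + 2) * L) = (1/2) ^ L"
  proof -
    have "(1/2::real) ^ ((a + 2) * L) = (1/2) ^ ((a + 1) * L) * (1/2) ^ L"
      by (simp add: power_add[symmetric] algebra_simps)
    moreover have "(2::real) ^ ((a + 1) * L) * (1/2) ^ ((a + 1) * L) = 1"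
      by (simp add: power_mult_distrib[symmetric])
    ultimately show ?thesis by (metis mult.assoc mult_1)
  qed
  have "measure_pmf.prob (greedy_random_order (Et j)) {l. l rt < Lp j}
     \<le> n * (q * (1 - real (sp j) / real m) ^ (m div L)) + n * (1/2) ^ rp j"
    using prob_bound_raw[of j] by (simp add: n_def m_def L_def q_def)
  also have "\<dots> \<le> 2 ^ ((a + 1) * L) * (1/2) ^ ((a + 2) * L) + 2 ^ ((a + 1) * L) * (1/2) ^ ((a + 2) * L)"
  proof (intro add_mono mult_mono n_le T1)
    show "(1/2::real) ^ rp j \<le> (1/2) ^ ((a + 2) * L)" by (simp add: rp_def a_def L_def)
    have "0 \<le> (1 - real (sp j) / real m)" using sm m0 by (simp add: field_simps)
    then show "0 \<le> real q * (1 - real (sp j) / real m) ^ (m div L)" by simp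
  qed auto
  also have "\<dots> = 2 * (1/2) ^ L" using key by simp
  finally show ?thesis by (simp add: L_def)
qed


lemma log_bound:
  assumes j: "j \<ge> 6"
  shows "1/6 * ln (real (card (Vt j))) / ln (ln (real (card (Vt j)))) \<le> real (Lp j)"
proof -
  define n where "n = card (Vt j)"
  define L where "L = Lp j"
  define a where "a = ap j"
  have L1: "L \<ge> 1" using Lp_ge[of j] by (simp add: L_def)
  have "4 ^ L \<le> Dp j ^ L" using Dp_ge[of j] by (intro power_mono) auto
  then have n4: "4 ^ L \<le> n" using card_V_ge[of j] by (simp add: n_def L_def)
  then have n4r: "(4::real) ^ L \<le> real n" by (metis of_nat_le_iff of_nat_numeral of_nat_power)
  have "(0::nat) < 4 ^ L" by simp
  then have "0 < n" using n4 by (rule order_less_le_trans)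
  then have npos: "0 < real n" by simp
  have ln4: "1 \<le> ln (4::real)"
  proof -
    have "exp 1 \<le> (4::real)" using exp_le by simp
    then have "ln (exp 1) \<le> ln (4::real)" by (subst ln_le_cancel_iff) auto
    then show ?thesis by simp
  qed
  have h1: "real L \<le> ln (real n)"
  proof -
    have "ln ((4::real) ^ L) \<le> ln (real n)" using n4r npos by (subst ln_le_cancel_iff) auto
    moreover have "ln ((4::real) ^ L) = real L * ln 4" by (simp add: ln_realpow)
    moreover have "real L * 1 \<le> real L * ln 4" using ln4 by (intro mult_left_mono) auto
    ultimately show ?thesis by linarith
  qed
  have Lpos: "0 < real L" using L1 by simp
  have h2: "real j * ln 2 \<le> ln (ln (real n))"
  proof -
    have "ln (real L) \<le> ln (ln (real n))" using h1 Lpos by (subst ln_le_cancel_iff) auto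
    moreover have "ln (real L) = real j * ln 2" by (simp add: L_def Lp_def ln_realpow)
    ultimately show ?thesis by simp
  qed
  have h3: "ln (real n) \<le> real ((a + 1) * L) * ln 2"
  proof -
    have "real n \<le> 2 ^ ((a + 1) * L)" using card_V_le2[OF j] by (simp add: n_def a_def L_def)
    then have "ln (real n) \<le> ln ((2::real) ^ ((a + 1) * L))" using npos by (subst ln_le_cancel_iff) auto
    then show ?thesis by (simp add: ln_realpow)
  qed
  have jpos: "0 < real j * ln 2" using j by simp
  have "ln (real n) / ln (ln (real n)) \<le> (real ((a + 1) * L) * ln 2) / (real j * ln 2)"
    using h1 h2 h3 jpos Lpos by (intro frac_le) auto
  also have "\<dots> = real ((a + 1) * L) / real j" using jpos by simp
  also have "\<dots> \<le> 6 * real L"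
  proof -
    have "real (a + 1) \<le> 6 * real j" using j by (simp add: a_def ap_def)
    then have "real (a + 1) * real L \<le> 6 * real j * real L" using Lpos by (intro mult_right_mono) auto
    moreover have jr: "0 < real j" using j by simp
    ultimately show ?thesis by (simp add: pos_divide_le_eq algebra_simps)
  qed
  finally show ?thesis by (simp add: n_def L_def)
qed

lemma prob_main:
  assumes j: "j \<ge> 6"
  shows "1 - 2 * (1/2) ^ Lp j \<le> measure_pmf.prob (greedy_random_order (Et j))
     {l. real (max_load (Vt j) l) \<ge> 1/6 * ln (real (card (Vt j))) / ln (ln (real (card (Vt j))))}"
proof -
  let ?p = "greedy_random_order (Et j)"
  have sub: "UNIV - {l. l rt < Lp j} \<subseteq>
      {l. real (max_load (Vt j) l) \<ge> 1/6 * ln (real (card (Vt j))) / ln (ln (real (card (Vt j))))}"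
  proof
    fix l assume "l \<in> UNIV - {l. l rt < Lp j}"
    then have "Lp j \<le> l rt" by simp
    also have "l rt \<le> max_load (Vt j) l" unfolding max_load_def using finVt rt_in by (intro Max_ge) auto
    finally have "real (Lp j) \<le> real (max_load (Vt j) l)" by simp
    then show "l \<in> {l. real (max_load (Vt j) l) \<ge> 1/6 * ln (real (card (Vt j))) / ln (ln (real (card (Vt j))))}"
      using log_bound[OF j] by simp
  qed
  have "1 - 2 * (1/2) ^ Lp j \<le> 1 - measure_pmf.prob ?p {l. l rt < Lp j}"
    using prob_root_small[OF j] by simp
  also have "\<dots> = measure_pmf.prob ?p (UNIV - {l. l rt < Lp j})"
    using measure_pmf.prob_compl[of "{l. l rt < Lp j}" ?p] by simp
  also have "\<dots> \<le> measure_pmf.prob ?p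
     {l. real (max_load (Vt j) l) \<ge> 1/6 * ln (real (card (Vt j))) / ln (ln (real (card (Vt j))))}"
    using sub by (rule measure_pmf.finite_measure_mono) simp
  finally show ?thesis .
qed

theorem mainTheorem2:
  "\<exists>(c::real) > 0. \<exists>(V :: nat \<Rightarrow> nat set) (E :: nat \<Rightarrow> nat set set).
     (\<forall>k. is_tree (V k) (E k)) \<and>
     filterlim (\<lambda>k. card (V k)) at_top sequentially \<and>
     ((\<lambda>k. measure_pmf.prob (greedy_random_order (E k))
          {l. real (max_load (V k) l) \<ge>
                c * ln (real (card (V k))) / ln (ln (real (card (V k))))})
       \<longlonglongrightarrow> 1)"
proof (intro exI conjI allI)
  show "(0::real) < 1/6" by simp
  show "is_tree (Vt (k + 6)) (Et (k + 6))" for k by (rule tree_t)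
  have kL: "k \<le> Lp (k + 6)" for k
  proof -
    have "k < 2 ^ k" by (rule less_exp)
    also have "(2::nat) ^ k \<le> 2 ^ (k + 6)" by (intro power_increasing) auto
    finally show ?thesis by (simp add: Lp_def)
  qed
  have kV: "k \<le> card (Vt (k + 6))" for k
  proof -
    have "Lp (k + 6) < 2 ^ Lp (k + 6)" by (rule less_exp)
    also have "(2::nat) ^ Lp (k + 6) \<le> Dp (k + 6) ^ Lp (k + 6)" using Dp_ge[of "k+6"] by (intro power_mono) auto
    also have "\<dots> \<le> card (Vt (k + 6))" by (rule card_V_ge)
    finally show ?thesis using kL[of k] by simp
  qed
  show "filterlim (\<lambda>k. card (Vt (k + 6))) at_top sequentially"
    by (rule filterlim_at_top_mono[OF filterlim_ident]) (use kV in auto)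
  show "(\<lambda>k. measure_pmf.prob (greedy_random_order (Et (k + 6)))
          {l. real (max_load (Vt (k + 6)) l) \<ge>
                1/6 * ln (real (card (Vt (k + 6)))) / ln (ln (real (card (Vt (k + 6)))))})
       \<longlonglongrightarrow> 1"
  proof (rule tendsto_sandwich[where f="\<lambda>k. 1 - 2 * (1/2) ^ k" and h="\<lambda>k. 1"])
    show "\<forall>\<^sub>F k in sequentially. 1 - 2 * (1/2) ^ k \<le> measure_pmf.prob (greedy_random_order (Et (k + 6)))
          {l. real (max_load (Vt (k + 6)) l) \<ge>
                1/6 * ln (real (card (Vt (k + 6)))) / ln (ln (real (card (Vt (k + 6)))))}"
    proof (rule always_eventually, rule allI)
      fix k
      have "(1/2::real) ^ Lp (k + 6) \<le> (1/2) ^ k" using kL[of k] by (intro power_decreasing) auto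
      then have A: "1 - 2 * (1/2::real) ^ k \<le> 1 - 2 * (1/2) ^ Lp (k + 6)" by simp
      have B: "1 - 2 * (1/2) ^ Lp (k + 6) \<le> measure_pmf.prob (greedy_random_order (Et (k + 6)))
          {l. real (max_load (Vt (k + 6)) l) \<ge>
                1/6 * ln (real (card (Vt (k + 6)))) / ln (ln (real (card (Vt (k + 6)))))}"
        by (rule prob_main) simp
      from A B show "1 - 2 * (1/2) ^ k \<le> measure_pmf.prob (greedy_random_order (Et (k + 6)))
          {l. real (max_load (Vt (k + 6)) l) \<ge>
                1/6 * ln (real (card (Vt (k + 6)))) / ln (ln (real (card (Vt (k + 6)))))}" by linarith
    qed
    show "\<forall>\<^sub>F k in sequentially. measure_pmf.prob (greedy_random_order (Et (k + 6)))
          {l. real (max_load (Vt (k + 6)) l) \<ge>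
                1/6 * ln (real (card (Vt (k + 6)))) / ln (ln (real (card (Vt (k + 6)))))} \<le> 1"
      by simp
    have "(\<lambda>k. (1/2::real) ^ k) \<longlonglongrightarrow> 0" using LIMSEQ_power_zero[of "1/2::real"] by simp
    then have "(\<lambda>k. 1 - 2 * (1/2::real) ^ k) \<longlonglongrightarrow> 1 - 2 * 0"
      by (rule tendsto_diff[OF tendsto_const tendsto_mult[OF tendsto_const]])
    then show "(\<lambda>k. 1 - 2 * (1/2::real) ^ k) \<longlonglongrightarrow> 1" by simp
  qed simp
qed


end
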